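(* Let $d\ge 1$ be an integer, $\gamma^2>0$ and $\sigma^2\ge 0$. For a finite non-empty coalition $\mathcal{K}$ of participants, where participant $k$ has data size $D_k>0$, let $K=|\mathcal{K}|$ and define the generalization error of the model trained by $\mathcal{K}$ as $$\varepsilon_{\mathcal{K}}=\frac{d\gamma^2}{K^2}\sum_{k\in\mathcal{K}}\frac{1}{D_k}+\frac{K-1}{K}\sigma^2 .$$ Let $\mathcal{K}_a$ and $\mathcal{K}_b$ be two disjoint non-empty coalitions with $K_a=|\mathcal{K}_a|$, $K_b=|\mathcal{K}_b|$, and let $H_a=K_a\big/\sum_{k\in\mathcal{K}_a}D_k^{-1}$ and $H_b=K_b\big/\sum_{k\in\mathcal{K}_b}D_k^{-1}$ be the harmonic means of the data sizes in $\mathcal{K}_a$ and $\mathcal{K}_b$, and assume $H_a\le H_b$. Write $\varepsilon_a=\varepsilon_{\mathcal{K}_a}$, $\varepsilon_b=\varepsilon_{\mathcal{K}_b}$, $\varepsilon_{a+b}=\varepsilon_{\mathcal{K}_a\cup\mathcal{K}_b}$. Then $\varepsilon_{a+b}<\max\{\varepsilon_a,\varepsilon_b\}$ if and only if $$\frac{\sigma^2}{\gamma^2}<\frac{H_bK_b+K_a(2H_b-H_a)}{H_aH_b(K_a+K_b)/d}.$$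
   Context: This models federated learning with linear models: $d$ is the feature dimension, $\gamma^2$ the variance of Gaussian noise on training targets (data variance), and $\sigma^2$ the variance capturing divergence across clients' feature distributions (client variance). The displayed formula for $\varepsilon_{\mathcal{K}}$ is taken as the definition of the generalization error of the federated model trained by coalition $\mathcal{K}$. *)

theory Defs
  imports Complex_Main
begin

definition gen_error :: "nat \<Rightarrow> real \<Rightarrow> real \<Rightarrow> ('a \<Rightarrow> real) \<Rightarrow> 'a set \<Rightarrow> real" where
  "gen_error d gamma2 sigma2 D K =
     real d * gamma2 / (real (card K))^2 * (\<Sum>k\<in>K. 1 / D k)
     + (real (card K) - 1) / real (card K) * sigma2"

definition harm_mean :: "('a \<Rightarrow> real) \<Rightarrow> 'a set \<Rightarrow> real" where
  "harm_mean D K = real (card K) / (\<Sum>k\<in>K. 1 / D k)"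

end

theory Submission
  imports Defs
begin

lemma key:
  fixes n g s a b Ha Hb :: real
  assumes n: "n > 0" and g: "g > 0" and a: "a > 0" and b: "b > 0"
    and Ha: "Ha > 0" and Hb: "Hb > 0" and le: "Ha \<le> Hb"
  defines "Ea \<equiv> n * g / a^2 * (a / Ha) + (a - 1) / a * s"
    and "Eb \<equiv> n * g / b^2 * (b / Hb) + (b - 1) / b * s"
    and "Eab \<equiv> n * g / (a+b)^2 * (a / Ha + b / Hb) + ((a+b) - 1) / (a+b) * s"
  shows "Eab < max Ea Eb \<longleftrightarrow>
     s / g < (Hb * b + a * (2 * Hb - Ha)) / (Ha * Hb * (a+b) / n)"
proof -
  define Xa where "Xa = n * g * (b * Hb + 2 * a * Hb - a * Ha) / (Ha * Hb * (a+b))"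
  define Xb where "Xb = n * g * (a * Ha + 2 * b * Ha - b * Hb) / (Ha * Hb * (a+b))"
  have ab: "a + b \<noteq> 0" "a \<noteq> 0" "b \<noteq> 0" "Ha \<noteq> 0" "Hb \<noteq> 0" using a b Ha Hb by auto
  have ia: "Ea - Eab = b / (a * (a+b)) * (Xa - s)"
    unfolding Ea_def Eab_def Xa_def using ab
    by (simp add: divide_simps power2_eq_square) (simp add: algebra_simps)
  have ib: "Eb - Eab = a / (b * (a+b)) * (Xb - s)"
    unfolding Eb_def Eab_def Xb_def using ab
    by (simp add: divide_simps power2_eq_square) (simp add: algebra_simps)
  have pa: "b / (a * (a+b)) > 0" using a b by simp
  have pb: "a / (b * (a+b)) > 0" using a b by simp
  have ca: "Eab < Ea \<longleftrightarrow> s < Xa"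
  proof -
    have "Eab < Ea \<longleftrightarrow> 0 < b / (a * (a+b)) * (Xa - s)" using ia by linarith
    also have "\<dots> \<longleftrightarrow> 0 < Xa - s" by (smt (verit) pa zero_less_mult_iff)
    finally show ?thesis by linarith
  qed
  have cb: "Eab < Eb \<longleftrightarrow> s < Xb"
  proof -
    have "Eab < Eb \<longleftrightarrow> 0 < a / (b * (a+b)) * (Xb - s)" using ib by linarith
    also have "\<dots> \<longleftrightarrow> 0 < Xb - s" by (smt (verit) pb zero_less_mult_iff)
    finally show ?thesis by linarith
  qed
  have "Xb \<le> Xa"
  proof -
    have "a * Ha + 2 * b * Ha - b * Hb \<le> b * Hb + 2 * a * Hb - a * Ha"
    proof -
      have "0 \<le> (a + b) * (Hb - Ha)" using a b le by simp
      then show ?thesis by (simp add: algebra_simps)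
    qed
    moreover have "n * g / (Ha * Hb * (a+b)) > 0" using n g Ha Hb a b by simp
    ultimately have "n * g / (Ha * Hb * (a+b)) * (a * Ha + 2 * b * Ha - b * Hb)
       \<le> n * g / (Ha * Hb * (a+b)) * (b * Hb + 2 * a * Hb - a * Ha)"
      by (meson less_imp_le mult_left_mono)
    then show ?thesis unfolding Xa_def Xb_def by simp
  qed
  then have "Eab < max Ea Eb \<longleftrightarrow> s < Xa" using ca cb by auto
  also have "\<dots> \<longleftrightarrow> s / g < (Hb * b + a * (2 * Hb - Ha)) / (Ha * Hb * (a+b) / n)"
    unfolding Xa_def using g n Ha Hb a b
    by (simp add: field_simps)
  finally show ?thesis .
qed

theorem corollary1:
  fixes d :: nat and gamma2 sigma2 :: real and D :: "'a \<Rightarrow> real"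
    and Ka Kb :: "'a set"
  assumes "d \<ge> 1" and "gamma2 > 0" and "sigma2 \<ge> 0"
    and "finite Ka" and "finite Kb" and "Ka \<noteq> {}" and "Kb \<noteq> {}"
    and "Ka \<inter> Kb = {}"
    and "\<forall>k\<in>Ka \<union> Kb. D k > 0"
    and "harm_mean D Ka \<le> harm_mean D Kb"
  shows "gen_error d gamma2 sigma2 D (Ka \<union> Kb)
           < max (gen_error d gamma2 sigma2 D Ka) (gen_error d gamma2 sigma2 D Kb)
         \<longleftrightarrow>
         sigma2 / gamma2 <
           (harm_mean D Kb * real (card Kb)
              + real (card Ka) * (2 * harm_mean D Kb - harm_mean D Ka))
           / (harm_mean D Ka * harm_mean D Kb * real (card Ka + card Kb) / real d)"
proof -
  define Sa where "Sa = (\<Sum>k\<in>Ka. 1 / D k)"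
  define Sb where "Sb = (\<Sum>k\<in>Kb. 1 / D k)"
  have Sa: "Sa > 0" unfolding Sa_def using assms
    by (intro sum_pos) auto
  have Sb: "Sb > 0" unfolding Sb_def using assms
    by (intro sum_pos) auto
  have cu: "card (Ka \<union> Kb) = card Ka + card Kb" using assms card_Un_disjoint by blast
  have su: "(\<Sum>k\<in>Ka \<union> Kb. 1 / D k) = Sa + Sb" unfolding Sa_def Sb_def
    using assms sum.union_disjoint by blast
  have a: "real (card Ka) > 0" using assms by auto
  have b: "real (card Kb) > 0" using assms by auto
  have Ha: "harm_mean D Ka = real (card Ka) / Sa" unfolding harm_mean_def Sa_def ..
  have Hb: "harm_mean D Kb = real (card Kb) / Sb" unfolding harm_mean_def Sb_def ..
  have eSa: "Sa = real (card Ka) / harm_mean D Ka" using Ha a Sa by simp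
  have eSb: "Sb = real (card Kb) / harm_mean D Kb" using Hb b Sb by simp
  have "harm_mean D Ka > 0" using Ha a Sa by simp
  moreover have "harm_mean D Kb > 0" using Hb b Sb by simp
  moreover have "real d > 0" using assms by simp
  ultimately have K: "?thesis = ?thesis" by simp
  show ?thesis
    unfolding gen_error_def cu su of_nat_add
    unfolding Sa_def[symmetric] Sb_def[symmetric]
    unfolding eSa eSb
    using key[of "real d" gamma2 "real (card Ka)" "real (card Kb)" "harm_mean D Ka" "harm_mean D Kb" sigma2]
      \<open>harm_mean D Ka > 0\<close> \<open>harm_mean D Kb > 0\<close> \<open>real d > 0\<close> a b assms(2,10)
    by simp
qed

end
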